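(* Let $\Gamma$ be a nontrivial standard graph and let $f$ be a non-constant real eigenfunction of $\Gamma$. Then $f$ is a Morse eigenfunction if and only if there is no edge $e$ of $\Gamma$ with $f|_e\equiv0$.
   Context: A metric graph is a finite connected graph $\Gamma=(\mathcal{V},\mathcal{E})$ (loops allowed) in which each edge $e$ is identified with an interval $[0,L_e]$, $L_e>0$. The Laplacian acts as $f|_e\mapsto -\frac{d^2}{dx_e^2}f|_e$ on functions in $\bigoplus_{e}H^2([0,L_e])$ satisfying Neumann (Kirchhoff) vertex conditions at every vertex $v$: $f$ is continuous at $v$ and the sum over edges incident to $v$ of the outgoing derivatives of $f$ at $v$ is zero. Such a graph is called standard; it is assumed to have no vertices of degree two, and it is nontrivial if it is not a single loop. An eigenfunction $f$ is called Morse if for each edge $e$, $f|_e$ is a Morse function, i.e. at no interior point of $e$ do both $f|_e'$ and $f|_e''$ vanish. *)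

theory Defs
  imports "HOL-Analysis.Analysis"
begin

text \<open>Edge e is identified with the interval [0, L e], x = 0 at src e and x = L e at tgt e.
  A function on the graph is a family f :: 'e => real => real, f e being f restricted to e
  (only the values on [0, L e] matter).\<close>

definition metric_graph ::
  "'v set \<Rightarrow> 'e set \<Rightarrow> ('e \<Rightarrow> 'v) \<Rightarrow> ('e \<Rightarrow> 'v) \<Rightarrow> ('e \<Rightarrow> real) \<Rightarrow> bool" where
  "metric_graph V E src tgt L \<longleftrightarrow>
     finite V \<and> finite E \<and> V \<noteq> {} \<and>
     (\<forall>e\<in>E. src e \<in> V \<and> tgt e \<in> V \<and> L e > 0)"

definition graph_connected ::
  "'v set \<Rightarrow> 'e set \<Rightarrow> ('e \<Rightarrow> 'v) \<Rightarrow> ('e \<Rightarrow> 'v) \<Rightarrow> bool" where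
  "graph_connected V E src tgt \<longleftrightarrow>
     (\<forall>u\<in>V. \<forall>w\<in>V. (u, w) \<in> ({(src e, tgt e) | e. e \<in> E} \<union> {(tgt e, src e) | e. e \<in> E})\<^sup>*)"

definition vdegree :: "'e set \<Rightarrow> ('e \<Rightarrow> 'v) \<Rightarrow> ('e \<Rightarrow> 'v) \<Rightarrow> 'v \<Rightarrow> nat" where
  "vdegree E src tgt v = card {e\<in>E. src e = v} + card {e\<in>E. tgt e = v}"

definition standard_graph ::
  "'v set \<Rightarrow> 'e set \<Rightarrow> ('e \<Rightarrow> 'v) \<Rightarrow> ('e \<Rightarrow> 'v) \<Rightarrow> ('e \<Rightarrow> real) \<Rightarrow> bool" where
  "standard_graph V E src tgt L \<longleftrightarrow>
     metric_graph V E src tgt L \<and> graph_connected V E src tgt \<and>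
     (\<forall>v\<in>V. vdegree E src tgt v \<noteq> 2)"

definition single_loop :: "'v set \<Rightarrow> 'e set \<Rightarrow> ('e \<Rightarrow> 'v) \<Rightarrow> ('e \<Rightarrow> 'v) \<Rightarrow> bool" where
  "single_loop V E src tgt \<longleftrightarrow> (\<exists>v e. V = {v} \<and> E = {e} \<and> src e = v \<and> tgt e = v)"

definition nontrivial_graph :: "'v set \<Rightarrow> 'e set \<Rightarrow> ('e \<Rightarrow> 'v) \<Rightarrow> ('e \<Rightarrow> 'v) \<Rightarrow> bool" where
  "nontrivial_graph V E src tgt \<longleftrightarrow> \<not> single_loop V E src tgt"

text \<open>f is an eigenfunction of the Neumann-Kirchhoff Laplacian with eigenvalue lam:
  on each edge f e is twice differentiable on the closed interval [0, L e]
  (one-sided at the ends), with derivative d e, and - f'' = lam f;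
  f is continuous at the vertices, satisfies the Kirchhoff condition (sum of
  outgoing derivatives is zero; at x = 0 the outgoing derivative is f'(0), at x = L it is -f'(L)),
  and f is not identically zero.\<close>
definition neumann_eigenfunction ::
  "'v set \<Rightarrow> 'e set \<Rightarrow> ('e \<Rightarrow> 'v) \<Rightarrow> ('e \<Rightarrow> 'v) \<Rightarrow> ('e \<Rightarrow> real) \<Rightarrow> real \<Rightarrow> ('e \<Rightarrow> real \<Rightarrow> real) \<Rightarrow> bool" where
  "neumann_eigenfunction V E src tgt L lam f \<longleftrightarrow>
     (\<exists>d :: 'e \<Rightarrow> real \<Rightarrow> real.
        (\<forall>e\<in>E. \<forall>x\<in>{0..L e}.
            (f e has_real_derivative d e x) (at x within {0..L e}) \<and>
            (d e has_real_derivative (- lam * f e x)) (at x within {0..L e})) \<and>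
        (\<forall>v\<in>V. \<exists>c. (\<forall>e\<in>E. src e = v \<longrightarrow> f e 0 = c) \<and> (\<forall>e\<in>E. tgt e = v \<longrightarrow> f e (L e) = c)) \<and>
        (\<forall>v\<in>V. (\<Sum>e\<in>{e\<in>E. src e = v}. d e 0) + (\<Sum>e\<in>{e\<in>E. tgt e = v}. - d e (L e)) = 0)) \<and>
     (\<exists>e\<in>E. \<exists>x\<in>{0..L e}. f e x \<noteq> 0)"

definition real_eigenfunction ::
  "'v set \<Rightarrow> 'e set \<Rightarrow> ('e \<Rightarrow> 'v) \<Rightarrow> ('e \<Rightarrow> 'v) \<Rightarrow> ('e \<Rightarrow> real) \<Rightarrow> ('e \<Rightarrow> real \<Rightarrow> real) \<Rightarrow> bool" where
  "real_eigenfunction V E src tgt L f \<longleftrightarrow> (\<exists>lam. neumann_eigenfunction V E src tgt L lam f)"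

definition graph_fun_constant :: "'e set \<Rightarrow> ('e \<Rightarrow> real) \<Rightarrow> ('e \<Rightarrow> real \<Rightarrow> real) \<Rightarrow> bool" where
  "graph_fun_constant E L f \<longleftrightarrow> (\<exists>c. \<forall>e\<in>E. \<forall>x\<in>{0..L e}. f e x = c)"

definition morse_on :: "real \<Rightarrow> (real \<Rightarrow> real) \<Rightarrow> bool" where
  "morse_on l g \<longleftrightarrow> \<not> (\<exists>x\<in>{0<..<l}. deriv g x = 0 \<and> deriv (deriv g) x = 0)"

definition morse_eigenfunction :: "'e set \<Rightarrow> ('e \<Rightarrow> real) \<Rightarrow> ('e \<Rightarrow> real \<Rightarrow> real) \<Rightarrow> bool" where
  "morse_eigenfunction E L f \<longleftrightarrow> (\<forall>e\<in>E. morse_on (L e) (f e))"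

end

theory Submission
  imports Defs
begin

lemma ode_zero:
  fixes f d :: "real \<Rightarrow> real" and lam l x0 :: real
  assumes dv: "\<And>x. x\<in>{0..l} \<Longrightarrow> (f has_real_derivative d x) (at x within {0..l}) \<and>
                 (d has_real_derivative (- lam * f x)) (at x within {0..l})"
    and x0: "x0 \<in> {0..l}" "f x0 = 0" "d x0 = 0"
  shows "\<forall>y\<in>{0..l}. f y = 0"
proof
  fix y assume y: "y \<in> {0..l}"
  define K where "K = \<bar>1 - lam\<bar>"
  define En where "En t = (f t)^2 + (d t)^2" for t
  have En0: "En x0 = 0" using x0 by (simp add: En_def)
  have Enn: "En t \<ge> 0" for t by (simp add: En_def)
  have bnd: "\<bar>2*(1-lam)*f t*d t\<bar> \<le> K * En t" for t
  proof -
    have "\<bar>2*(1-lam)*f t*d t\<bar> = K * (2*\<bar>f t\<bar>*\<bar>d t\<bar>)" unfolding K_def abs_mult by simp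
    also have "\<dots> \<le> K * En t" unfolding En_def
    proof (intro mult_left_mono)
      have "0 \<le> (\<bar>f t\<bar> - \<bar>d t\<bar>)^2" by simp
      then show "2*\<bar>f t\<bar>*\<bar>d t\<bar> \<le> (f t)^2 + (d t)^2"
        unfolding power2_diff power2_abs by linarith
    qed (simp add: K_def)
    finally show ?thesis .
  qed
  have dE: "(En has_real_derivative 2*(1-lam)*f t*d t) (at t within {0..l})" if "t \<in> {0..l}" for t
    unfolding En_def using dv[OF that]
    by (auto intro!: derivative_eq_intros simp: algebra_simps)
  show "f y = 0"
  proof (cases "x0 \<le> y")
    case True
    define g where "g t = En t * exp (- K * t)" for t
    have dg: "(g has_real_derivative (2*(1-lam)*f t*d t - K * En t) * exp (- K * t)) (at t within {0..l})"
      if "t \<in> {0..l}" for t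
      unfolding g_def using dE[OF that]
      by (auto intro!: derivative_eq_intros simp: algebra_simps)
    have "g x0 \<ge> g y"
    proof (rule DERIV_nonpos_imp_decreasing_open[OF True])
      fix t assume t: "x0 < t" "t < y"
      then have tt: "t \<in> {0..l}" "0 < t" "t < l" using x0 y by auto
      have "(g has_real_derivative (2*(1-lam)*f t*d t - K * En t) * exp (- K * t)) (at t)"
        using dg[OF tt(1)] at_within_Icc_at[OF tt(2,3)] by simp
      moreover have "(2*(1-lam)*f t*d t - K * En t) * exp (- K * t) \<le> 0"
        using bnd[of t] by (intro mult_nonpos_nonneg) auto
      ultimately show "\<exists>D. (g has_real_derivative D) (at t) \<and> D \<le> 0" by blast
    next
      have "continuous_on {0..l} g"
        unfolding continuous_on_eq_continuous_within using dg DERIV_continuous by blast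
      then show "continuous_on {x0..y} g" by (rule continuous_on_subset) (use x0 y in auto)
    qed
    then have "En y \<le> 0" using En0 by (simp add: g_def mult_le_0_iff)
    then have "(f y)^2 \<le> 0" unfolding En_def using zero_le_power2[of "d y"] by linarith
    then show ?thesis by simp
  next
    case False
    define g where "g t = En t * exp (K * t)" for t
    have dg: "(g has_real_derivative (2*(1-lam)*f t*d t + K * En t) * exp (K * t)) (at t within {0..l})"
      if "t \<in> {0..l}" for t
      unfolding g_def using dE[OF that]
      by (auto intro!: derivative_eq_intros simp: algebra_simps)
    have "g y \<le> g x0"
    proof (rule DERIV_nonneg_imp_increasing_open[of y x0])
      show "y \<le> x0" using False by simp
    next
      fix t assume t: "y < t" "t < x0"
      then have tt: "t \<in> {0..l}" "0 < t" "t < l" using x0 y by auto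
      have "(g has_real_derivative (2*(1-lam)*f t*d t + K * En t) * exp (K * t)) (at t)"
        using dg[OF tt(1)] at_within_Icc_at[OF tt(2,3)] by simp
      moreover have "(2*(1-lam)*f t*d t + K * En t) * exp (K * t) \<ge> 0"
        using bnd[of t] by (intro mult_nonneg_nonneg) auto
      ultimately show "\<exists>D. (g has_real_derivative D) (at t) \<and> D \<ge> 0" by blast
    next
      have "continuous_on {0..l} g"
        unfolding continuous_on_eq_continuous_within using dg DERIV_continuous by blast
      then show "continuous_on {y..x0} g" by (rule continuous_on_subset) (use x0 y in auto)
    qed
    then have "En y \<le> 0" using En0 by (simp add: g_def mult_le_0_iff)
    then have "(f y)^2 \<le> 0" unfolding En_def using zero_le_power2[of "d y"] by linarith
    then show ?thesis by simp
  qed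
qed


lemma lin_edge:
  fixes f d :: "real \<Rightarrow> real" and l :: real
  assumes dv: "\<And>x. x\<in>{0..l} \<Longrightarrow> (f has_real_derivative d x) (at x within {0..l}) \<and>
                 (d has_real_derivative 0) (at x within {0..l})"
    and l: "0 \<le> l"
  shows "\<exists>a. \<forall>x\<in>{0..l}. d x = a \<and> f x = f 0 + a * x"
proof -
  obtain a where a: "\<forall>x\<in>{0..l}. d x = a"
    using has_field_derivative_zero_constant[of "{0..l}" d] dv by auto
  have "((\<lambda>x. f x - a * x) has_real_derivative 0) (at x within {0..l})" if "x \<in> {0..l}" for x
    using dv[OF that] a that by (auto intro!: derivative_eq_intros)
  then obtain c where c: "\<forall>x\<in>{0..l}. f x - a * x = c"
    using has_field_derivative_zero_constant[of "{0..l}" "\<lambda>x. f x - a * x"] by auto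
  have "f 0 = c" using c[rule_format, of 0] l by simp
  then show ?thesis using a c by (intro exI[of _ a]) auto
qed

lemma interior_derivs:
  fixes f d :: "real \<Rightarrow> real" and lam l x :: real
  assumes dv: "\<And>x. x\<in>{0..l} \<Longrightarrow> (f has_real_derivative d x) (at x within {0..l}) \<and>
                 (d has_real_derivative (- lam * f x)) (at x within {0..l})"
    and x: "x \<in> {0<..<l}"
  shows "deriv f x = d x" "deriv (deriv f) x = - lam * f x"
proof -
  have D1: "deriv f y = d y" if "y \<in> {0<..<l}" for y
  proof -
    have "(f has_real_derivative d y) (at y)"
      using dv[of y] that at_within_Icc_at[of 0 y l] by auto
    then show ?thesis by (rule DERIV_imp_deriv)
  qed
  then show "deriv f x = d x" using x by blast
  have "(d has_real_derivative (- lam * f x)) (at x)"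
    using dv[of x] x at_within_Icc_at[of 0 x l] by auto
  then have "(deriv f has_real_derivative (- lam * f x)) (at x)"
    by (rule has_field_derivative_transform_within_open[where S="{0<..<l}"]) (use x D1 in auto)
  then show "deriv (deriv f) x = - lam * f x" by (rule DERIV_imp_deriv)
qed


theorem lemma7p2:
  fixes V :: "'v set" and E :: "'e set" and src tgt :: "'e \<Rightarrow> 'v"
    and L :: "'e \<Rightarrow> real" and f :: "'e \<Rightarrow> real \<Rightarrow> real"
  assumes "standard_graph V E src tgt L"
    and "nontrivial_graph V E src tgt"
    and "real_eigenfunction V E src tgt L f"
    and "\<not> graph_fun_constant E L f"
  shows "morse_eigenfunction E L f \<longleftrightarrow> \<not> (\<exists>e\<in>E. \<forall>x\<in>{0..L e}. f e x = 0)"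
proof -
  have finV: "finite V" and finE: "finite E" and inV: "\<And>e. e \<in> E \<Longrightarrow> src e \<in> V \<and> tgt e \<in> V"
    and Lpos: "\<And>e. e \<in> E \<Longrightarrow> L e > 0" and conn: "graph_connected V E src tgt"
    using assms(1) unfolding standard_graph_def metric_graph_def by auto
  obtain lam d where
    dv: "\<And>e x. e \<in> E \<Longrightarrow> x\<in>{0..L e} \<Longrightarrow>
            (f e has_real_derivative d e x) (at x within {0..L e}) \<and>
            (d e has_real_derivative (- lam * f e x)) (at x within {0..L e})" and
    vc: "\<forall>v\<in>V. \<exists>c. (\<forall>e\<in>E. src e = v \<longrightarrow> f e 0 = c) \<and> (\<forall>e\<in>E. tgt e = v \<longrightarrow> f e (L e) = c)" and
    kir: "\<forall>v\<in>V. (\<Sum>e\<in>{e\<in>E. src e = v}. d e 0) + (\<Sum>e\<in>{e\<in>E. tgt e = v}. - d e (L e)) = 0"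
    using assms(3) unfolding real_eigenfunction_def neumann_eigenfunction_def by blast
  have ID: "deriv (f e) x = d e x" "deriv (deriv (f e)) x = - lam * f e x"
    if "e \<in> E" "x \<in> {0<..<L e}" for e x
    using interior_derivs[of "L e" "f e" "d e" lam x] dv[OF that(1)] that(2) by auto
  have const: "graph_fun_constant E L f" if lam0: "lam = 0"
  proof -
    have "\<forall>e\<in>E. \<exists>a. \<forall>x\<in>{0..L e}. d e x = a \<and> f e x = f e 0 + a * x"
    proof
      fix e assume e: "e \<in> E"
      show "\<exists>a. \<forall>x\<in>{0..L e}. d e x = a \<and> f e x = f e 0 + a * x"
        by (rule lin_edge) (use dv[OF e] lam0 Lpos[OF e] in auto)
    qed
    then obtain a where a: "\<And>e x. e \<in> E \<Longrightarrow> x\<in>{0..L e} \<Longrightarrow> d e x = a e \<and> f e x = f e 0 + a e * x"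
      by metis
    define c where "c v = (SOME c. (\<forall>e\<in>E. src e = v \<longrightarrow> f e 0 = c) \<and> (\<forall>e\<in>E. tgt e = v \<longrightarrow> f e (L e) = c))" for v
    have cv: "(\<forall>e\<in>E. src e = v \<longrightarrow> f e 0 = c v) \<and> (\<forall>e\<in>E. tgt e = v \<longrightarrow> f e (L e) = c v)" if "v \<in> V" for v
      unfolding c_def by (rule someI_ex) (use vc that in blast)
    have cS: "f e 0 = c (src e)" and cT: "f e (L e) = c (tgt e)" if "e \<in> E" for e
      using cv[of "src e"] cv[of "tgt e"] inV[OF that] that by auto
    have d0: "d e 0 = a e" and dL: "d e (L e) = a e" and fL: "f e (L e) = f e 0 + a e * L e" if "e \<in> E" for e
      using a[OF that, of 0] a[OF that, of "L e"] Lpos[OF that] by auto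
    have "0 = (\<Sum>v\<in>V. c v * ((\<Sum>e\<in>{e\<in>E. src e = v}. d e 0) + (\<Sum>e\<in>{e\<in>E. tgt e = v}. - d e (L e))))"
      using kir by simp
    also have "\<dots> = (\<Sum>v\<in>V. (\<Sum>e\<in>{e\<in>E. src e = v}. f e 0 * d e 0)) +
                    (\<Sum>v\<in>V. (\<Sum>e\<in>{e\<in>E. tgt e = v}. - (f e (L e) * d e (L e))))"
    proof -
      have "(\<Sum>v\<in>V. c v * ((\<Sum>e\<in>{e\<in>E. src e = v}. d e 0) + (\<Sum>e\<in>{e\<in>E. tgt e = v}. - d e (L e))))
          = (\<Sum>v\<in>V. (\<Sum>e\<in>{e\<in>E. src e = v}. c v * d e 0)) +
                    (\<Sum>v\<in>V. (\<Sum>e\<in>{e\<in>E. tgt e = v}. - (c v * d e (L e))))"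
        by (simp add: distrib_left sum_distrib_left sum.distrib)
      also have "\<dots> = (\<Sum>v\<in>V. (\<Sum>e\<in>{e\<in>E. src e = v}. f e 0 * d e 0)) +
                    (\<Sum>v\<in>V. (\<Sum>e\<in>{e\<in>E. tgt e = v}. - (f e (L e) * d e (L e))))"
        by (intro arg_cong2[where f="(+)"] sum.cong refl) (auto simp: cS cT)
      finally show ?thesis .
    qed
    also have "\<dots> = (\<Sum>e\<in>E. f e 0 * d e 0) + (\<Sum>e\<in>E. - (f e (L e) * d e (L e)))"
      using sum.group[OF finE finV, of src "\<lambda>e. f e 0 * d e 0"]
            sum.group[OF finE finV, of tgt "\<lambda>e. - (f e (L e) * d e (L e))"] inV
      by (simp add: image_subset_iff)
    also have "\<dots> = (\<Sum>e\<in>E. - ((a e)^2 * L e))"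
      by (simp add: sum.distrib[symmetric] d0 dL fL algebra_simps power2_eq_square cong: sum.cong)
    finally have "(\<Sum>e\<in>E. (a e)^2 * L e) = 0" by (simp add: sum_negf)
    then have "\<forall>e\<in>E. (a e)^2 * L e = 0"
      using sum_nonneg_eq_0_iff[OF finE, of "\<lambda>e. (a e)^2 * L e"] Lpos
      by (simp add: less_imp_le)
    then have a0: "a e = 0" if "e \<in> E" for e using Lpos[OF that] that by auto
    have fe: "f e x = c (src e)" if "e \<in> E" "x \<in> {0..L e}" for e x
      using a[OF that] a0[OF that(1)] cS[OF that(1)] by simp
    have edge: "c (src e) = c (tgt e)" if "e \<in> E" for e
      using fe[OF that, of "L e"] cT[OF that] Lpos[OF that] by auto
    obtain e0 where e0: "e0 \<in> E" using assms(4) unfolding graph_fun_constant_def by blast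
    define v0 where "v0 = src e0"
    have v0: "v0 \<in> V" using inV[OF e0] v0_def by simp
    have "c w = c v0" if "w \<in> V" for w
    proof -
      have "(v0, w) \<in> ({(src e, tgt e) | e. e \<in> E} \<union> {(tgt e, src e) | e. e \<in> E})\<^sup>*"
        using conn v0 that unfolding graph_connected_def by blast
      then show ?thesis
      proof (induction rule: rtrancl_induct)
        case base then show ?case by simp
      next
        case (step y z) then show ?case using edge by auto
      qed
    qed
    then show ?thesis unfolding graph_fun_constant_def using fe inV
      by (intro exI[of _ "c v0"]) auto
  qed
  show ?thesis
  proof
    assume M: "morse_eigenfunction E L f"
    show "\<not> (\<exists>e\<in>E. \<forall>x\<in>{0..L e}. f e x = 0)"
    proof
      assume "\<exists>e\<in>E. \<forall>x\<in>{0..L e}. f e x = 0"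
      then obtain e where e: "e \<in> E" and z: "\<forall>x\<in>{0..L e}. f e x = 0" by blast
      define x where "x = L e / 2"
      have x: "x \<in> {0<..<L e}" using Lpos[OF e] x_def by auto
      have "(f e has_real_derivative d e x) (at x)"
        using dv[OF e, of x] x at_within_Icc_at[of 0 x "L e"] by auto
      moreover have "(f e has_real_derivative 0) (at x)"
        by (rule has_field_derivative_transform_within_open[where S="{0<..<L e}" and f="\<lambda>_. 0"])
           (use x z in auto)
      ultimately have "d e x = 0" by (rule DERIV_unique)
      then have "deriv (f e) x = 0 \<and> deriv (deriv (f e)) x = 0"
        using ID[OF e x] z x by auto
      then show False using M e x unfolding morse_eigenfunction_def morse_on_def by blast
    qed
  next
    assume N: "\<not> (\<exists>e\<in>E. \<forall>x\<in>{0..L e}. f e x = 0)"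
    show "morse_eigenfunction E L f"
      unfolding morse_eigenfunction_def morse_on_def
    proof (intro ballI notI)
      fix e assume e: "e \<in> E"
      assume "\<exists>x\<in>{0<..<L e}. deriv (f e) x = 0 \<and> deriv (deriv (f e)) x = 0"
      then obtain x where x: "x \<in> {0<..<L e}" and h: "deriv (f e) x = 0" "deriv (deriv (f e)) x = 0"
        by blast
      have dx: "d e x = 0" and lx: "lam * f e x = 0" using ID[OF e x] h by auto
      show False
      proof (cases "lam = 0")
        case True then show False using const assms(4) by blast
      next
        case False
        then have "f e x = 0" using lx by simp
        then have "\<forall>y\<in>{0..L e}. f e y = 0"
          using ode_zero[of "L e" "f e" "d e" lam x] dv[OF e] x dx by auto
        then show False using N e by blast
      qed
    qed
  qed
qed

end
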